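(* Let $k\ge1$ and $m\ge0$. The largest positive integer $n\in A_{2k}$ with $\max\mathcal{CG}(n)=F_{2k+2m}$ is $$F_{2k}+F_{2k+2}+\cdots+F_{2k+2m-2}+2F_{2k+2m}$$ (for $m=0$ this is $2F_{2k}$).
   Context: Fibonacci numbers: $F_1=F_2=1$, $F_{n+1}=F_n+F_{n-1}$ for $n\ge2$. Chung–Graham decomposition: every positive integer $n$ has a unique representation $n=\sum_{i\ge1}c_iF_{2i}$ with $c_i\in\{0,1,2\}$, only finitely many nonzero, such that whenever $c_i=c_j=2$ with $i<j$ there is $k$ with $i<k<j$ and $c_k=0$. Let $\mathcal{CG}(n)$ be the set of $F_{2i}$ with $c_i\neq0$. For $k\ge1$, $A_{2k}=\{n\ge1:\min\mathcal{CG}(n)=F_{2k}\}$. *)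

theory Defs
  imports "HOL-Number_Theory.Fib"
begin

definition cg_rep :: "nat \<Rightarrow> (nat \<Rightarrow> nat) \<Rightarrow> bool" where
  "cg_rep n c \<longleftrightarrow>
     c 0 = 0 \<and> (\<forall>i. c i \<le> 2) \<and> finite {i. c i \<noteq> 0} \<and>
     (\<forall>i j. 1 \<le> i \<and> i < j \<and> c i = 2 \<and> c j = 2 \<longrightarrow> (\<exists>k. i < k \<and> k < j \<and> c k = 0)) \<and>
     n = (\<Sum>i\<in>{i. c i \<noteq> 0}. c i * fib (2 * i))"

definition cg_coeffs :: "nat \<Rightarrow> (nat \<Rightarrow> nat)" where
  "cg_coeffs n = (THE c. cg_rep n c)"

definition CG :: "nat \<Rightarrow> nat set" where
  "CG n = {fib (2 * i) | i. 1 \<le> i \<and> cg_coeffs n i \<noteq> 0}"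

definition A_even :: "nat \<Rightarrow> nat set" where
  "A_even k = {n. 1 \<le> n \<and> Min (CG n) = fib (2 * k)}"

end

theory Submission
  imports Defs
begin

declare fib2[simp del]

lemma fibE1: "fib (2*N+3) = fib (2*N+2) + fib (2*N+1)"
proof -
  have "2*N+3 = Suc (Suc (2*N+1))" "2*N+2 = Suc (2*N+1)" by simp_all
  then show ?thesis by (simp only: fib2)
qed
lemma fibE2: "fib (2*N+4) = fib (2*N+3) + fib (2*N+2)"
proof -
  have "2*N+4 = Suc (Suc (2*N+2))" "2*N+3 = Suc (2*N+2)" by simp_all
  then show ?thesis by (simp only: fib2)
qed

lemma fibE0: "fib (2*N+2) = fib (2*N+1) + fib (2*N)"
proof -
  have "2*N+2 = Suc (Suc (2*N))" "2*N+1 = Suc (2*N)" by simp_all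
  then show ?thesis by (simp only: fib2)
qed

lemma fib_even_strict: "i < j \<Longrightarrow> fib (2*i) < fib (2*j)"
proof (induction j)
  case 0 then show ?case by simp
next
  case (Suc j)
  have "fib (2*j) < fib (2*Suc j)"
    using fib_neq_0_nat[of "2*j+1"] fib_plus_2[of "2*j"] by simp
  with Suc show ?case by (cases "i = j") auto
qed

definition sepc :: "(nat \<Rightarrow> nat) \<Rightarrow> bool" where
  "sepc c \<longleftrightarrow> (\<forall>i j. 1 \<le> i \<and> i < j \<and> c i = 2 \<and> c j = 2 \<longrightarrow> (\<exists>k. i < k \<and> k < j \<and> c k = 0))"

definition propB :: "(nat \<Rightarrow> nat) \<Rightarrow> nat \<Rightarrow> bool" where
  "propB c N \<longleftrightarrow> (\<forall>j. 1 \<le> j \<and> j \<le> N \<and> c j = 2 \<longrightarrow> (\<exists>k. j < k \<and> k \<le> N \<and> c k = 0))"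

lemma boundAB:
  assumes "c 0 = 0" "\<forall>i. c i \<le> 2" "sepc c" "\<forall>i<k. c i = 0" "1 \<le> k"
  shows "k \<le> N + 1 \<Longrightarrow> (\<Sum>i\<le>N. c i * fib (2*i)) + fib (2*k - 1) \<le> fib (2*N+2)
          \<and> (propB c N \<longrightarrow> (\<Sum>i\<le>N. c i * fib (2*i)) + fib (2*k - 1) \<le> fib (2*N+1))"
proof (induction N)
  case 0
  then have "k = 1" using assms by simp
  then show ?case using assms by (simp add: fib2)
next
  case (Suc N)
  show ?case
  proof (cases "k = N + 2")
    case True
    then have "(\<Sum>i\<le>Suc N. c i * fib (2*i)) = 0" using assms by simp
    moreover have "fib (2*k-1) \<le> fib (2*Suc N+2)" using True by (intro fib_mono) simp
    moreover have "2*k - 1 = 2*Suc N + 1" using True by simp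
    then have "fib (2*k-1) \<le> fib (2*Suc N+1)" by (simp only: le_refl)
    ultimately show ?thesis by (simp only: add_0) simp
  next
    case False
    with Suc.prems have kN: "k \<le> N+1" by simp
    define s where "s = (\<Sum>i\<le>N. c i * fib (2*i))"
    have IH: "s + fib (2*k - 1) \<le> fib (2*N+2)"
      "propB c N \<Longrightarrow> s + fib (2*k - 1) \<le> fib (2*N+1)"
      using Suc.IH[OF kN] unfolding s_def by auto
    have sum: "(\<Sum>i\<le>Suc N. c i * fib (2*i)) = s + c (Suc N) * fib (2*N+2)"
      unfolding s_def by simp
    have e1: "fib (2*Suc N+1) = fib (2*N+2) + fib (2*N+1)" using fibE1[of N] by (simp add: eval_nat_numeral)
    have e2: "fib (2*Suc N+2) = fib (2*N+2) + fib (2*N+2) + fib (2*N+1)"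
      using fibE1[of N] fibE2[of N] by (simp add: eval_nat_numeral)
    have cs: "c (Suc N) = 0 \<or> c (Suc N) = 1 \<or> c (Suc N) = 2" using assms(2)[rule_format, of "Suc N"] by auto
    have A: "(\<Sum>i\<le>Suc N. c i * fib (2*i)) + fib (2*k - 1) \<le> fib (2*Suc N+2)"
    proof -
      { assume c2: "c (Suc N) = 2"
        have "propB c N" unfolding propB_def
        proof (intro allI impI)
          fix j assume j: "1 \<le> j \<and> j \<le> N \<and> c j = 2"
          have "j < Suc N" using j by simp
          then obtain kk where "j < kk" "kk < Suc N" "c kk = 0"
            using assms(3) c2 j unfolding sepc_def by blast
          then show "\<exists>k>j. k \<le> N \<and> c k = 0" by auto
        qed
        then have ?thesis using IH(2) sum e2 c2 by simp }
      moreover have "c (Suc N) \<noteq> 2 \<Longrightarrow> ?thesis" using IH(1) sum e2 cs by auto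
      ultimately show ?thesis by blast
    qed
    have B: "propB c (Suc N) \<Longrightarrow> (\<Sum>i\<le>Suc N. c i * fib (2*i)) + fib (2*k - 1) \<le> fib (2*Suc N+1)"
    proof -
      assume pb: "propB c (Suc N)"
      have n2: "c (Suc N) \<noteq> 2"
      proof
        assume "c (Suc N) = 2"
        then have "1 \<le> Suc N \<and> Suc N \<le> Suc N \<and> c (Suc N) = 2" by simp
        then obtain kk where "Suc N < kk" "kk \<le> Suc N" using pb unfolding propB_def by blast
        then show False by simp
      qed
      show ?thesis
      proof (cases "c (Suc N) = 0")
        case True then show ?thesis using IH(1) sum e1 by simp
      next
        case False
        with n2 cs have c1: "c (Suc N) = 1" by auto
        have "propB c N" unfolding propB_def
        proof (intro allI impI)
          fix j assume j: "1 \<le> j \<and> j \<le> N \<and> c j = 2"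
          have "1 \<le> j \<and> j \<le> Suc N \<and> c j = 2" using j by simp
          then obtain kk where "j < kk" "kk \<le> Suc N" "c kk = 0"
            using pb unfolding propB_def by blast
          moreover have "kk \<noteq> Suc N" using c1 \<open>c kk = 0\<close> by auto
          ultimately show "\<exists>k>j. k \<le> N \<and> c k = 0" by auto
        qed
        then show ?thesis using IH(2) sum e1 c1 by simp
      qed
    qed
    show ?thesis using A B by blast
  qed
qed

lemma uniq:
  assumes "c 0 = 0" "d 0 = 0" "\<forall>i. c i \<le> 2" "\<forall>i. d i \<le> 2" "sepc c" "sepc d"
  shows "(\<Sum>i\<le>N. c i * fib (2*i)) = (\<Sum>i\<le>N. d i * fib (2*i)) \<Longrightarrow> \<forall>i\<le>N. c i = d i"
proof (induction N)
  case 0 then show ?case using assms by simp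
next
  case (Suc N)
  define sc where "sc = (\<Sum>i\<le>N. c i * fib (2*i))"
  define sd where "sd = (\<Sum>i\<le>N. d i * fib (2*i))"
  define F where "F = fib (2*N+2)"
  have bc: "sc + 1 \<le> F" using boundAB[OF assms(1,3,5), of 1 N] unfolding sc_def F_def using assms(1) by simp
  have bd: "sd + 1 \<le> F" using boundAB[OF assms(2,4,6), of 1 N] unfolding sd_def F_def using assms(2) by simp
  have eq: "sc + c (Suc N) * F = sd + d (Suc N) * F"
    using Suc.prems unfolding sc_def sd_def F_def by simp
  have ab: "c (Suc N) = d (Suc N)"
  proof (rule ccontr)
    assume ne: "c (Suc N) \<noteq> d (Suc N)"
    { fix a b x y :: nat assume "a < b" "x + 1 \<le> F" "x + a * F = y + b * F"
      then have "(a+1) * F \<le> b * F" by (intro mult_le_mono1) simp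
      with \<open>x + 1 \<le> F\<close> \<open>x + a * F = y + b * F\<close> have False by (simp add: algebra_simps) }
    note aux = this
    show False
    proof (cases "c (Suc N) < d (Suc N)")
      case True then show ?thesis using aux[OF True bc eq] by blast
    next
      case False then have "d (Suc N) < c (Suc N)" using ne by simp
      then show ?thesis using aux[OF _ bd eq[symmetric]] by blast
    qed
  qed
  then have "sc = sd" using eq by simp
  then have "\<forall>i\<le>N. c i = d i" using Suc.IH unfolding sc_def sd_def by blast
  then show ?case using ab by (auto simp: le_Suc_eq)
qed

definition good :: "(nat \<Rightarrow> nat) \<Rightarrow> nat \<Rightarrow> bool" where
  "good c N \<longleftrightarrow> c 0 = 0 \<and> (\<forall>i. c i \<le> 2) \<and> (\<forall>i>N. c i = 0) \<and> sepc c"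

lemma sum_upd:
  "(\<Sum>i\<le>Suc N. (c(Suc N := v)) i * fib (2*i)) = (\<Sum>i\<le>N. c i * fib (2*i)) + v * fib (2*N+2)"
proof -
  have "(\<Sum>i\<le>N. (c(Suc N := v)) i * fib (2*i)) = (\<Sum>i\<le>N. c i * fib (2*i))"
    by (intro sum.cong) auto
  then show ?thesis by simp
qed

lemma good_upd1:
  assumes "good c N" shows "good (c(Suc N := 1)) (Suc N)"
  unfolding good_def sepc_def
proof (intro conjI allI impI)
  show "(c(Suc N := 1)) 0 = 0" using assms unfolding good_def by simp
  fix i show "(c(Suc N := 1)) i \<le> 2" using assms unfolding good_def by simp
next
  fix i assume "Suc N < i" then show "(c(Suc N := 1)) i = 0" using assms unfolding good_def by simp
next
  fix i j assume h: "1 \<le> i \<and> i < j \<and> (c(Suc N := 1)) i = 2 \<and> (c(Suc N := 1)) j = 2"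
  have cz: "\<forall>i>N. c i = 0" using assms unfolding good_def by simp
  have jN: "j \<noteq> Suc N" "i \<noteq> Suc N" using h by auto
  then have ci: "c i = 2" "c j = 2" using h by auto
  have "j \<le> N"
  proof (rule ccontr)
    assume "\<not> j \<le> N" then have "c j = 0" using cz by simp
    with ci show False by simp
  qed
  have sep: "sepc c" using assms unfolding good_def by simp
  have "1 \<le> i \<and> i < j \<and> c i = 2 \<and> c j = 2" using ci h by simp
  from sep[unfolded sepc_def, rule_format, OF this]
  obtain k where "i < k" "k < j" "c k = 0" by blast
  then show "\<exists>k>i. k < j \<and> (c(Suc N := 1)) k = 0" using \<open>j \<le> N\<close> by (intro exI[of _ k]) auto
qed

lemma good_upd2:
  assumes "good c N" "propB c N" shows "good (c(Suc N := 2)) (Suc N)"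
  unfolding good_def sepc_def
proof (intro conjI allI impI)
  show "(c(Suc N := 2)) 0 = 0" using assms unfolding good_def by simp
  fix i show "(c(Suc N := 2)) i \<le> 2" using assms unfolding good_def by simp
next
  fix i assume "Suc N < i" then show "(c(Suc N := 2)) i = 0" using assms unfolding good_def by simp
next
  fix i j assume h: "1 \<le> i \<and> i < j \<and> (c(Suc N := 2)) i = 2 \<and> (c(Suc N := 2)) j = 2"
  have cz: "\<forall>i>N. c i = 0" using assms unfolding good_def by simp
  have iN: "i \<le> N"
  proof (rule ccontr)
    assume "\<not> i \<le> N"
    then have "i > N" by simp
    show False
    proof (cases "i = Suc N")
      case True then have "j > Suc N" using h by simp
      then have "c j = 0" using cz by simp
      moreover have "(c(Suc N := 2)) j = c j" using \<open>j > Suc N\<close> by simp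
      ultimately show False using h by simp
    next
      case False
      then have "(c(Suc N := 2)) i = c i" by simp
      moreover have "c i = 0" using cz \<open>i > N\<close> by simp
      ultimately show False using h by simp
    qed
  qed
  then have ci: "c i = 2" using h by simp
  show "\<exists>k>i. k < j \<and> (c(Suc N := 2)) k = 0"
  proof (cases "j = Suc N")
    case True
    have "1 \<le> i \<and> i \<le> N \<and> c i = 2" using iN ci h by simp
    from assms(2)[unfolded propB_def, rule_format, OF this]
    obtain k where "i < k" "k \<le> N" "c k = 0" by blast
    then have "k < j" "(c(Suc N := 2)) k = 0" using True by simp_all
    then show ?thesis using \<open>i < k\<close> by blast
  next
    case False
    have "j \<le> N"
    proof (rule ccontr)
      assume "\<not> j \<le> N" then have "c j = 0" using cz by simp
      moreover have "(c(Suc N := 2)) j = c j" using False by simp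
      ultimately show False using h by simp
    qed
    then have cj: "c j = 2" using h by simp
    have sep: "sepc c" using assms(1) unfolding good_def by simp
    have "1 \<le> i \<and> i < j \<and> c i = 2 \<and> c j = 2" using ci cj h by simp
    from sep[unfolded sepc_def, rule_format, OF this]
    obtain k where "i < k" "k < j" "c k = 0" by blast
    then have "(c(Suc N := 2)) k = 0" using \<open>j \<le> N\<close> by simp
    then show ?thesis using \<open>i < k\<close> \<open>k < j\<close> by blast
  qed
qed

lemma exist:
  "(\<forall>r. r < fib (2*N+2) \<longrightarrow> (\<exists>c. good c N \<and> (\<Sum>i\<le>N. c i * fib (2*i)) = r))
 \<and> (\<forall>r. r < fib (2*N+1) \<longrightarrow> (\<exists>c. good c N \<and> propB c N \<and> (\<Sum>i\<le>N. c i * fib (2*i)) = r))"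
proof (induction N)
  case 0
  have "good (\<lambda>_. 0) 0" unfolding good_def sepc_def by simp
  moreover have "propB (\<lambda>_. 0) 0" unfolding propB_def by simp
  ultimately show ?case by (auto simp: fib2)
next
  case (Suc N)
  define F where "F = fib (2*N+2)"
  have IHA: "\<forall>r. r < fib (2*N+2) \<longrightarrow> (\<exists>c. good c N \<and> (\<Sum>i\<le>N. c i * fib (2*i)) = r)"
    using Suc.IH by (rule conjunct1)
  have IHB: "\<forall>r. r < fib (2*N+1) \<longrightarrow> (\<exists>c. good c N \<and> propB c N \<and> (\<Sum>i\<le>N. c i * fib (2*i)) = r)"
    using Suc.IH by (rule conjunct2)
  have e1: "fib (2*Suc N+1) = F + fib (2*N+1)" using fibE1[of N] unfolding F_def by (simp add: eval_nat_numeral)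
  have e2: "fib (2*Suc N+2) = F + F + fib (2*N+1)"
    using fibE1[of N] fibE2[of N] unfolding F_def by (simp add: eval_nat_numeral)
  have sU: "\<And>c v. (\<Sum>i\<le>Suc N. (c(Suc N := v)) i * fib (2*i)) = (\<Sum>i\<le>N. c i * fib (2*i)) + v * F"
    using sum_upd unfolding F_def by simp
  have sK: "\<And>c. good c N \<Longrightarrow> (\<Sum>i\<le>Suc N. c i * fib (2*i)) = (\<Sum>i\<le>N. c i * fib (2*i))"
    unfolding good_def by simp
  have gS: "\<And>c. good c N \<Longrightarrow> good c (Suc N)" unfolding good_def by simp
  have A: "\<forall>r. r < fib (2*Suc N+2) \<longrightarrow> (\<exists>c. good c (Suc N) \<and> (\<Sum>i\<le>Suc N. c i * fib (2*i)) = r)"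
  proof (intro allI impI)
    fix r assume r: "r < fib (2*Suc N+2)"
    show "\<exists>c. good c (Suc N) \<and> (\<Sum>i\<le>Suc N. c i * fib (2*i)) = r"
    proof (cases "r < F")
      case True
      then have "r < fib (2*N+2)" using F_def by simp
      from IHA[rule_format, OF this] obtain c where c: "good c N" "(\<Sum>i\<le>N. c i * fib (2*i)) = r" by blast
      have "good c (Suc N)" "(\<Sum>i\<le>Suc N. c i * fib (2*i)) = r" using sK[OF c(1)] gS[OF c(1)] c(2) by simp_all
      then show ?thesis by blast
    next
      case False
      show ?thesis
      proof (cases "r < F + F")
        case True
        then have "r - F < fib (2*N+2)" using F_def False by simp
        from IHA[rule_format, OF this] obtain c where c: "good c N" "(\<Sum>i\<le>N. c i * fib (2*i)) = r - F" by blast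
        have "(\<Sum>i\<le>Suc N. (c(Suc N := 1)) i * fib (2*i)) = r" using sU[of c 1] c(2) False by simp
        then show ?thesis using good_upd1[OF c(1)] by blast
      next
        case False2: False
        then have "r - F - F < fib (2*N+1)" using r e2 by simp
        from IHB[rule_format, OF this] obtain c where c: "good c N" "propB c N" "(\<Sum>i\<le>N. c i * fib (2*i)) = r - F - F" by blast
        have "(\<Sum>i\<le>Suc N. (c(Suc N := 2)) i * fib (2*i)) = r" using sU[of c 2] c(3) False2 by simp
        then show ?thesis using good_upd2[OF c(1,2)] by blast
      qed
    qed
  qed
  have B: "\<forall>r. r < fib (2*Suc N+1) \<longrightarrow> (\<exists>c. good c (Suc N) \<and> propB c (Suc N) \<and> (\<Sum>i\<le>Suc N. c i * fib (2*i)) = r)"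
  proof (intro allI impI)
    fix r assume r: "r < fib (2*Suc N+1)"
    show "\<exists>c. good c (Suc N) \<and> propB c (Suc N) \<and> (\<Sum>i\<le>Suc N. c i * fib (2*i)) = r"
    proof (cases "r < F")
      case True
      then have "r < fib (2*N+2)" using F_def by simp
      from IHA[rule_format, OF this] obtain c where c: "good c N" "(\<Sum>i\<le>N. c i * fib (2*i)) = r" by blast
      have "propB c (Suc N)" unfolding propB_def
      proof (intro allI impI)
        fix j assume "1 \<le> j \<and> j \<le> Suc N \<and> c j = 2"
        moreover have "c (Suc N) = 0" using c(1) unfolding good_def by simp
        ultimately have "j < Suc N" by (cases "j = Suc N") auto
        then show "\<exists>k>j. k \<le> Suc N \<and> c k = 0" using \<open>c (Suc N) = 0\<close> by blast
      qed
      moreover have "good c (Suc N)" "(\<Sum>i\<le>Suc N. c i * fib (2*i)) = r" using sK[OF c(1)] gS[OF c(1)] c(2) by simp_all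
      ultimately show ?thesis by blast
    next
      case False
      then have "r - F < fib (2*N+1)" using r e1 by simp
      from IHB[rule_format, OF this] obtain c where c: "good c N" "propB c N" "(\<Sum>i\<le>N. c i * fib (2*i)) = r - F" by blast
      have "propB (c(Suc N := 1)) (Suc N)" unfolding propB_def
      proof (intro allI impI)
        fix j assume j: "1 \<le> j \<and> j \<le> Suc N \<and> (c(Suc N := 1)) j = 2"
        then have "j \<noteq> Suc N" by auto
        with j have "j \<le> N" "c j = 2" by auto
        then obtain k where "j < k" "k \<le> N" "c k = 0" using c(2) j unfolding propB_def by blast
        then show "\<exists>k>j. k \<le> Suc N \<and> (c(Suc N := 1)) k = 0" by (intro exI[of _ k]) auto
      qed
      moreover have "(\<Sum>i\<le>Suc N. (c(Suc N := 1)) i * fib (2*i)) = r" using sU[of c 1] c(3) False by simp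
      ultimately show ?thesis using good_upd1[OF c(1)] by blast
    qed
  qed
  show ?case using A B by blast
qed

lemma fibX: "fib (x+2) = fib (x+1) + fib x" "fib (x+3) = fib (x+2) + fib (x+1)"
  "fib (x+4) = fib (x+3) + fib (x+2)"
proof -
  have "x+2 = Suc (Suc x)" "x+1 = Suc x" by simp_all
  then show "fib (x+2) = fib (x+1) + fib x" by (simp only: fib2)
  have "x+3 = Suc (Suc (x+1))" "x+2 = Suc (x+1)" by simp_all
  then show "fib (x+3) = fib (x+2) + fib (x+1)" by (simp only: fib2)
  have "x+4 = Suc (Suc (x+2))" "x+3 = Suc (x+2)" by simp_all
  then show "fib (x+4) = fib (x+3) + fib (x+2)" by (simp only: fib2)
qed

lemma identity:
  assumes "1 \<le> k"
  shows "(\<Sum>j<m. fib (2*k+2*j)) + 2 * fib (2*k+2*m) + fib (2*k-1) = fib (2*(k+m)+2)"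
proof (induction m)
  case 0
  obtain k' where k: "k = Suc k'" using assms by (cases k) auto
  define X where "X = 2*k'"
  have h: "2*k-1 = X+1" "2*k+2*0 = X+2" "2*(k+0)+2 = X+4" unfolding X_def k by simp_all
  show ?case unfolding h using fibX[of X] by simp
next
  case (Suc m)
  define X where "X = 2*(k+m)"
  have e: "(\<Sum>j<Suc m. fib (2*k+2*j)) = (\<Sum>j<m. fib (2*k+2*j)) + fib X"
    by (simp add: X_def algebra_simps)
  have h: "2*k+2*Suc m = X+2" "2*(k+Suc m)+2 = X+4" "2*k+2*m = X" "2*(k+m)+2 = X+2"
    unfolding X_def by simp_all
  show ?case using Suc.IH fibX[of X] unfolding e h by linarith
qed

lemma sum_supp:
  assumes "\<forall>i>N. c i = 0"
  shows "(\<Sum>i\<in>{i. c i \<noteq> 0}. c i * fib (2*i)) = (\<Sum>i\<le>N. c i * fib (2*i))"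
proof (rule sum.mono_neutral_left)
  show "{i. c i \<noteq> 0} \<subseteq> {..N}" using assms by (auto simp: not_less[symmetric])
qed auto

lemma fib_ge: "Suc m \<le> fib (m+2)"
proof (induction m)
  case 0 then show ?case by (simp add: fib2)
next
  case (Suc m)
  have "fib (Suc m + 2) = fib (m+2) + fib (m+1)" using fibX(2)[of m] by (simp add: eval_nat_numeral)
  moreover have "fib (m+1) > 0" by (intro fib_neq_0_nat) simp
  ultimately show ?case using Suc.IH by simp
qed

lemma cg_ex: "\<exists>c. cg_rep n c"
proof -
  have "n < fib (2*n+2)"
  proof -
    have "Suc n \<le> fib (n+2)" by (rule fib_ge)
    also have "\<dots> \<le> fib (2*n+2)" by (intro fib_mono) simp
    finally show ?thesis by simp
  qed
  then obtain c where c: "good c n" "(\<Sum>i\<le>n. c i * fib (2*i)) = n" using exist[of n] by blast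
  have z: "\<forall>i>n. c i = 0" using c(1) unfolding good_def by simp
  have "finite {i. c i \<noteq> 0}"
    by (rule finite_subset[of _ "{..n}"]) (use z in \<open>auto simp: not_less[symmetric]\<close>)
  then have "cg_rep n c" using c sum_supp[OF z] unfolding cg_rep_def good_def sepc_def by auto
  then show ?thesis by blast
qed

lemma cg_rep_parts:
  assumes "cg_rep n c"
  shows "c 0 = 0" "\<forall>i. c i \<le> 2" "finite {i. c i \<noteq> 0}" "sepc c"
    "n = (\<Sum>i\<in>{i. c i \<noteq> 0}. c i * fib (2*i))"
proof -
  have "c 0 = 0 \<and> (\<forall>i. c i \<le> 2) \<and> finite {i. c i \<noteq> 0} \<and> sepc c \<and>
    n = (\<Sum>i\<in>{i. c i \<noteq> 0}. c i * fib (2*i))"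
    using assms[unfolded cg_rep_def] unfolding sepc_def .
  note h = this
  show "c 0 = 0" using h by (elim conjE)
  show "\<forall>i. c i \<le> 2" using h by (elim conjE)
  show "finite {i. c i \<noteq> 0}" using h by (elim conjE)
  show "sepc c" using h by (elim conjE)
  show "n = (\<Sum>i\<in>{i. c i \<noteq> 0}. c i * fib (2*i))" using h by (elim conjE)
qed

lemma cg_unique:
  assumes "cg_rep n c" "cg_rep n d" shows "c = d"
proof -
  note pc = cg_rep_parts[OF assms(1)] and pd = cg_rep_parts[OF assms(2)]
  have f: "finite ({i. c i \<noteq> 0} \<union> {i. d i \<noteq> 0})" using pc(3) pd(3) by (rule finite_UnI)
  then obtain N where N: "\<forall>i\<in>{i. c i \<noteq> 0} \<union> {i. d i \<noteq> 0}. i \<le> N"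
    using finite_nat_set_iff_bounded_le by blast
  have zc: "\<forall>i>N. c i = 0"
  proof (intro allI impI)
    fix i assume "N < i"
    then show "c i = 0" using N[rule_format, of i] by (cases "c i = 0") auto
  qed
  have zd: "\<forall>i>N. d i = 0"
  proof (intro allI impI)
    fix i assume "N < i"
    then show "d i = 0" using N[rule_format, of i] by (cases "d i = 0") auto
  qed
  have "(\<Sum>i\<le>N. c i * fib (2*i)) = (\<Sum>i\<le>N. d i * fib (2*i))"
    using pc(5) pd(5) sum_supp[OF zc] sum_supp[OF zd] by simp
  from uniq[OF pc(1) pd(1) pc(2) pd(2) pc(4) pd(4) this]
  have le: "\<forall>i\<le>N. c i = d i" .
  show ?thesis
  proof
    fix i show "c i = d i"
    proof (cases "i \<le> N")
      case True then show ?thesis using le by simp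
    next
      case False then show ?thesis using zc zd by simp
    qed
  qed
qed

lemma cg_coeffs_rep: "cg_rep n (cg_coeffs n)"
proof -
  have "\<exists>!c. cg_rep n c" by (rule ex_ex1I[OF cg_ex cg_unique])
  then show ?thesis unfolding cg_coeffs_def by (rule theI')
qed

lemma cg_coeffs_eq: "cg_rep n c \<Longrightarrow> cg_coeffs n = c"
  by (rule cg_unique[OF cg_coeffs_rep])

lemma CG_eq: "CG n = (\<lambda>i. fib (2*i)) ` {i. cg_coeffs n i \<noteq> 0}"
proof -
  have z0: "cg_coeffs n 0 = 0" by (rule cg_rep_parts(1)[OF cg_coeffs_rep])
  have "{i. 1 \<le> i \<and> cg_coeffs n i \<noteq> 0} = {i. cg_coeffs n i \<noteq> 0}"
  proof (rule Collect_cong)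
    fix i show "(1 \<le> i \<and> cg_coeffs n i \<noteq> 0) = (cg_coeffs n i \<noteq> 0)"
      using z0 by (cases i) simp_all
  qed
  then show ?thesis unfolding CG_def setcompr_eq_image by simp
qed

lemma sum_shift: "(\<Sum>i\<in>{k..<k+m}. fib (2*i)) = (\<Sum>j<m. fib (2*k+2*j))"
  by (induction m) (simp_all add: algebra_simps)

theorem lemma3p1:
  fixes k m :: nat
  assumes "1 \<le> k"
  shows "(\<Sum>j<m. fib (2*k + 2*j)) + 2 * fib (2*k + 2*m)
           \<in> {n. n \<in> A_even k \<and> Max (CG n) = fib (2*k + 2*m)}
       \<and> (\<forall>n. n \<in> A_even k \<and> Max (CG n) = fib (2*k + 2*m) \<longrightarrow>
             n \<le> (\<Sum>j<m. fib (2*k + 2*j)) + 2 * fib (2*k + 2*m))"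
proof -
  define S where "S = (\<Sum>j<m. fib (2*k + 2*j)) + 2 * fib (2*k + 2*m)"
  define cS where "cS = (\<lambda>i::nat. if k \<le> i \<and> i < k+m then 1 else if i = k+m then 2 else (0::nat))"
  have supp: "{i. cS i \<noteq> 0} = {k..k+m}" unfolding cS_def by auto
  have ssum: "(\<Sum>i\<in>{k..k+m}. cS i * fib (2*i)) = S"
  proof -
    have a: "{k..k+m} = insert (k+m) {k..<k+m}" by auto
    have b: "(\<Sum>i\<in>{k..<k+m}. cS i * fib (2*i)) = (\<Sum>i\<in>{k..<k+m}. fib (2*i))"
      by (intro sum.cong) (auto simp: cS_def)
    have c: "fib (2*(k+m)) = fib (2*k+2*m)" by (simp add: algebra_simps)
    show ?thesis unfolding a S_def using b c sum_shift[of k m] by (simp add: cS_def)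
  qed
  have repS: "cg_rep S cS"
    unfolding cg_rep_def
  proof (intro conjI)
    show "cS 0 = 0" using assms unfolding cS_def by simp
    show "\<forall>i. cS i \<le> 2" unfolding cS_def by simp
    show "finite {i. cS i \<noteq> 0}" unfolding supp by simp
    show "\<forall>i j. 1 \<le> i \<and> i < j \<and> cS i = 2 \<and> cS j = 2 \<longrightarrow> (\<exists>k. i < k \<and> k < j \<and> cS k = 0)"
      unfolding cS_def by auto
    show "S = (\<Sum>i\<in>{i. cS i \<noteq> 0}. cS i * fib (2*i))" unfolding supp ssum ..
  qed
  have CGS: "CG S = (\<lambda>i. fib (2*i)) ` {k..k+m}"
    unfolding CG_eq cg_coeffs_eq[OF repS] supp ..
  have fm: "fib (2*(k+m)) = fib (2*k+2*m)" by (simp add: algebra_simps)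
  have minS: "Min (CG S) = fib (2*k)" unfolding CGS
    by (rule Min_eqI) (auto intro: fib_mono)
  have memM: "fib (2*k+2*m) \<in> (\<lambda>i. fib (2*i)) ` {k..k+m}"
    by (rule image_eqI[of _ _ "k+m"]) (simp_all add: algebra_simps)
  have leM: "\<And>y. y \<in> (\<lambda>i. fib (2*i)) ` {k..k+m} \<Longrightarrow> y \<le> fib (2*k+2*m)"
  proof -
    fix y assume "y \<in> (\<lambda>i. fib (2*i)) ` {k..k+m}"
    then obtain i where "i \<le> k+m" "y = fib (2*i)" by auto
    then show "y \<le> fib (2*k+2*m)" using fib_mono[of "2*i" "2*k+2*m"] by simp
  qed
  have maxS: "Max (CG S) = fib (2*k+2*m)" unfolding CGS
    by (rule Max_eqI[OF _ leM memM]) simp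
  have S1: "1 \<le> S"
  proof -
    have "fib (2*k+2*m) > 0" using assms by (intro fib_neq_0_nat) simp
    then show ?thesis unfolding S_def by simp
  qed
  have part1: "S \<in> {n. n \<in> A_even k \<and> Max (CG n) = fib (2*k + 2*m)}"
    using S1 minS maxS unfolding A_even_def by simp
  have part2: "\<forall>n. n \<in> A_even k \<and> Max (CG n) = fib (2*k + 2*m) \<longrightarrow> n \<le> S"
  proof (intro allI impI)
    fix n assume h: "n \<in> A_even k \<and> Max (CG n) = fib (2*k + 2*m)"
    define c where "c = cg_coeffs n"
    have rep: "cg_rep n c" unfolding c_def by (rule cg_coeffs_rep)
    have fin: "finite (CG n)" unfolding CG_eq using rep unfolding cg_rep_def c_def by simp
    have mem: "\<And>i. c i \<noteq> 0 \<Longrightarrow> fib (2*i) \<in> CG n" unfolding CG_eq c_def by simp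
    have lo: "\<forall>i<k. c i = 0"
    proof (intro allI impI)
      fix i assume "i < k"
      show "c i = 0"
      proof (rule ccontr)
        assume "c i \<noteq> 0"
        then have "Min (CG n) \<le> fib (2*i)" using Min_le[OF fin mem] by blast
        then have "fib (2*k) \<le> fib (2*i)" using h unfolding A_even_def by simp
        then show False using fib_even_strict[OF \<open>i < k\<close>] by simp
      qed
    qed
    have hi: "\<forall>i>k+m. c i = 0"
    proof (intro allI impI)
      fix i assume "i > k+m"
      show "c i = 0"
      proof (rule ccontr)
        assume "c i \<noteq> 0"
        then have "fib (2*i) \<le> Max (CG n)" using Max_ge[OF fin mem] by blast
        then have "fib (2*i) \<le> fib (2*(k+m))" using h fm by simp
        then show False using fib_even_strict[OF \<open>i > k+m\<close>] by simp
      qed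
    qed
    have nsum: "n = (\<Sum>i\<le>k+m. c i * fib (2*i))" using rep sum_supp[OF hi] unfolding cg_rep_def by simp
    have "c 0 = 0" "\<forall>i. c i \<le> 2" "sepc c" using rep unfolding cg_rep_def sepc_def by auto
    from boundAB[OF this lo assms, of "k+m"]
    have "n + fib (2*k-1) \<le> fib (2*(k+m)+2)" unfolding nsum by simp
    then show "n \<le> S" using identity[OF assms, of m] unfolding S_def by simp
  qed
  show ?thesis using part1 part2 unfolding S_def by blast
qed

end
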